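(* Let $n\ge 3$ and let $H$ be a $3$-uniform hypergraph on $[n]$ such that every $4$-subset of $[n]$ contains an edge of $H$. Then $|\{F\in H^{<_L}: 1\in F\}|\ge\binom{n-2}{2}$, where $H^{<_L}$ is the exterior shifting of $H$ with respect to the lexicographic order.
   Context: The lexicographic order $<_L$ on $\binom{[n]}{3}$: $S<_L T$ iff $\min(S\triangle T)\in S$. Let $X=(x_{ij})$ be an $n\times n$ matrix of independent indeterminates over $\mathbb{Q}$ and $C_3(X)$ its third compound matrix, with entries $c_{S,T}=\det(x_{ij})_{i\in S,j\in T}$ for $3$-subsets $S,T$. The exterior shifting $H^{<_L}$ is obtained by going through $\binom{[n]}{3}$ in increasing $<_L$ order and selecting $S$ iff the row of $C_3(X)$ indexed by $S$, restricted to the columns indexed by $H$, is linearly independent over $\mathbb{Q}(x_{ij})$ of the previously selected rows. Equivalently, the claim says the submatrix of $C_3(X)$ with rows indexed by the $3$-subsets containing $1$ and columns indexed by $H$ has rank at least $\binom{n-2}{2}$. *)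

theory Defs
  imports "HOL-Library.Poly_Mapping" "HOL-Library.Product_Lexorder"
          "HOL-Computational_Algebra.Fraction_Field"
          "Jordan_Normal_Form.Determinant"
begin

(* Polynomial ring Q[x_ij] : monomials are finitely supported exponent maps on
   variable indices (i,j); polynomials are finitely supported coefficient maps. *)
type_synonym qpoly = "((nat \<times> nat) \<Rightarrow>\<^sub>0 nat) \<Rightarrow>\<^sub>0 rat"

type_synonym qfun = "qpoly fract"

definition xvar :: "nat \<Rightarrow> nat \<Rightarrow> qfun" where
  "xvar i j = Fract (Poly_Mapping.single (Poly_Mapping.single (i, j) 1) 1) 1"

(* entry c_{S,T} of the third compound matrix C_3(X): the minor of X with rows S
   and columns T, both listed increasingly *)
definition compound3 :: "nat set \<Rightarrow> nat set \<Rightarrow> qfun" where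
  "compound3 S T =
     (let s = sorted_list_of_set S; t = sorted_list_of_set T
      in det (mat 3 3 (\<lambda>(a, b). xvar (s ! a) (t ! b))))"

definition lexless :: "nat set \<Rightarrow> nat set \<Rightarrow> bool" where
  "lexless S T \<longleftrightarrow> S \<noteq> T \<and> Min ((S - T) \<union> (T - S)) \<in> S"

definition triples :: "nat \<Rightarrow> nat set set" where
  "triples n = {S. S \<subseteq> {1..n} \<and> card S = 3}"

(* the row of C_3(X) indexed by S, restricted to the columns in H, is linearly
   independent over Q(x_ij) of the rows indexed by Sel (restricted to H) *)
definition row_indep :: "nat set set \<Rightarrow> nat set set \<Rightarrow> nat set \<Rightarrow> bool" where
  "row_indep H Sel S \<longleftrightarrow>
     \<not> (\<exists>coef :: nat set \<Rightarrow> qfun.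
          \<forall>T\<in>H. compound3 S T = (\<Sum>S'\<in>Sel. coef S' * compound3 S' T))"

fun greedy :: "nat set set \<Rightarrow> nat set set \<Rightarrow> nat set list \<Rightarrow> nat set set" where
  "greedy H Sel [] = Sel"
| "greedy H Sel (S # Ss) = greedy H (if row_indep H Sel S then insert S Sel else Sel) Ss"

definition lex_list :: "nat \<Rightarrow> nat set list" where
  "lex_list n = (SOME L. distinct L \<and> set L = triples n \<and> sorted_wrt lexless L)"

definition ext_shift_lex :: "nat \<Rightarrow> nat set set \<Rightarrow> nat set set" where
  "ext_shift_lex n H = greedy H {} (lex_list n)"

end

theory Submission
  imports Defs
begin

lemma det1: assumes A: "A \<in> carrier_mat 1 1" shows "det A = A$$(0,0)"
proof -
  have 1: "det A = (\<Sum>j<1. A $$ (0, j) * cofactor A 0 j)" by (rule laplace_expansion_row[OF A], simp)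
  have 2: "mat_delete A 0 0 \<in> carrier_mat 0 0" using mat_delete_carrier[OF A] by simp
  have 3: "cofactor A 0 0 = 1" unfolding cofactor_def using det_dim_zero[OF 2] by simp
  show ?thesis unfolding 1 using 3 by simp
qed
lemma det2: assumes A: "A \<in> carrier_mat 2 2" shows "det A = A$$(0,0)*A$$(1,1) - A$$(0,1)*A$$(1,0)"
proof -
  have 1: "det A = (\<Sum>j<2. A $$ (0, j) * cofactor A 0 j)" by (rule laplace_expansion_row[OF A], simp)
  have 2: "(\<Sum>j<2. A $$ (0, j) * cofactor A 0 j) = A $$ (0, 0) * cofactor A 0 0 + A $$ (0, 1) * cofactor A 0 1"
    by (simp add: numeral_2_eq_2)
  have c: "mat_delete A 0 j \<in> carrier_mat 1 1" for j using mat_delete_carrier[OF A] by simp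
  have d: "dim_row A = 2" "dim_col A = 2" using A by auto
  have 3: "cofactor A 0 0 = A$$(1,1)" unfolding cofactor_def det1[OF c] 
    by (simp add: mat_delete_def d numeral_2_eq_2)
  have 4: "cofactor A 0 1 = - A$$(1,0)" unfolding cofactor_def det1[OF c] 
    by (simp add: mat_delete_def d numeral_2_eq_2)
  show ?thesis unfolding 1 2 3 4 by simp
qed
lemma det3: assumes A: "A \<in> carrier_mat 3 3"
  shows "det A = A$$(0,0)*A$$(1,1)*A$$(2,2) - A$$(0,0)*A$$(1,2)*A$$(2,1) - A$$(0,1)*A$$(1,0)*A$$(2,2)
     + A$$(0,1)*A$$(1,2)*A$$(2,0) + A$$(0,2)*A$$(1,0)*A$$(2,1) - A$$(0,2)*A$$(1,1)*A$$(2,0)"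
proof -
  have 1: "det A = (\<Sum>j<3. A $$ (0, j) * cofactor A 0 j)" by (rule laplace_expansion_row[OF A], simp)
  have 2: "(\<Sum>j<3. A $$ (0, j) * cofactor A 0 j) = A $$ (0, 0) * cofactor A 0 0 + A $$ (0, 1) * cofactor A 0 1 + A $$ (0, 2) * cofactor A 0 2"
    by (simp add: eval_nat_numeral)
  have c: "mat_delete A 0 j \<in> carrier_mat 2 2" for j using mat_delete_carrier[OF A] by simp
  have d: "dim_row A = 3" "dim_col A = 3" using A by auto
  have 3: "cofactor A 0 0 = A$$(1,1)*A$$(2,2) - A$$(1,2)*A$$(2,1)" unfolding cofactor_def det2[OF c] 
    by (simp add: mat_delete_def d numeral_2_eq_2)
  have 4: "cofactor A 0 1 = - (A$$(1,0)*A$$(2,2) - A$$(1,2)*A$$(2,0))" unfolding cofactor_def det2[OF c] 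
    by (simp add: mat_delete_def d numeral_2_eq_2)
  have 5: "cofactor A 0 2 = A$$(1,0)*A$$(2,1) - A$$(1,1)*A$$(2,0)" unfolding cofactor_def det2[OF c] 
    by (simp add: mat_delete_def d numeral_2_eq_2)
  show ?thesis unfolding 1 2 3 4 5 by (simp add: algebra_simps)
qed

definition ind :: "((nat \<times> nat) \<Rightarrow>\<^sub>0 nat) \<Rightarrow> rat" where
  "ind m = (if (\<forall>k\<in>Poly_Mapping.keys m. fst k = 1 \<or> fst k = snd k) then 1 else 0)"

definition ev :: "qpoly \<Rightarrow> rat" where
  "ev p = (\<Sum>m\<in>Poly_Mapping.keys p. Poly_Mapping.lookup p m * ind m)"

lemma ev_alt: assumes "finite A" "Poly_Mapping.keys p \<subseteq> A"
  shows "ev p = (\<Sum>m\<in>A. Poly_Mapping.lookup p m * ind m)"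
  unfolding ev_def
  by (rule sum.mono_neutral_left[OF assms(1) assms(2)]) (auto simp: in_keys_iff)

lemma ev_add: "ev (p + q) = ev p + ev q"
proof -
  let ?A = "Poly_Mapping.keys p \<union> Poly_Mapping.keys q \<union> Poly_Mapping.keys (p + q)"
  have f: "finite ?A" by simp
  have 1: "ev p = (\<Sum>m\<in>?A. Poly_Mapping.lookup p m * ind m)" by (rule ev_alt) auto
  have 2: "ev q = (\<Sum>m\<in>?A. Poly_Mapping.lookup q m * ind m)" by (rule ev_alt) auto
  have 3: "ev (p+q) = (\<Sum>m\<in>?A. Poly_Mapping.lookup (p+q) m * ind m)" by (rule ev_alt) auto
  show ?thesis unfolding 1 2 3 by (simp add: lookup_add distrib_right sum.distrib)
qed

lemma ev_zero: "ev 0 = 0" by (simp add: ev_def)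

lemma ev_sum: "ev (sum f A) = (\<Sum>x\<in>A. ev (f x))"
  by (induction A rule: infinite_finite_induct) (auto simp: ev_zero ev_add)

lemma ev_single: "ev (Poly_Mapping.single m c) = c * ind m"
proof -
  have "ev (Poly_Mapping.single m c) = (\<Sum>m'\<in>{m}. Poly_Mapping.lookup (Poly_Mapping.single m c) m' * ind m')"
    by (rule ev_alt) auto
  thus ?thesis by simp
qed

lemma keys_add_nat: "Poly_Mapping.keys (m + m' :: 'a \<Rightarrow>\<^sub>0 nat) = Poly_Mapping.keys m \<union> Poly_Mapping.keys m'"
  by (auto simp: in_keys_iff lookup_add)

lemma ind_add: "ind (m + m') = ind m * ind m'"
  unfolding ind_def keys_add_nat by auto

lemma poly_expand: "p = (\<Sum>m\<in>Poly_Mapping.keys p. Poly_Mapping.single m (Poly_Mapping.lookup p m))"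
proof (rule poly_mapping_eqI)
  fix k
  show "Poly_Mapping.lookup p k = Poly_Mapping.lookup (\<Sum>m\<in>Poly_Mapping.keys p. Poly_Mapping.single m (Poly_Mapping.lookup p m)) k"
    by (auto simp: lookup_sum lookup_single when_def in_keys_iff sum.delta)
qed

lemma ev_mult: "ev (p * q) = ev p * ev q"
proof -
  have "p * q = (\<Sum>m\<in>Poly_Mapping.keys p. Poly_Mapping.single m (Poly_Mapping.lookup p m)) *
     (\<Sum>m\<in>Poly_Mapping.keys q. Poly_Mapping.single m (Poly_Mapping.lookup q m))"
    using poly_expand[of p] poly_expand[of q] by simp
  also have "\<dots> = (\<Sum>m\<in>Poly_Mapping.keys p. \<Sum>m'\<in>Poly_Mapping.keys q.
      Poly_Mapping.single (m + m') (Poly_Mapping.lookup p m * Poly_Mapping.lookup q m'))"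
    by (simp add: sum_product mult_single)
  finally have "ev (p * q) = (\<Sum>m\<in>Poly_Mapping.keys p. \<Sum>m'\<in>Poly_Mapping.keys q.
      (Poly_Mapping.lookup p m * ind m) * (Poly_Mapping.lookup q m' * ind m'))"
    by (simp add: ev_sum ev_single ind_add mult_ac)
  also have "\<dots> = ev p * ev q" by (simp add: ev_def sum_product)
  finally show ?thesis .
qed

lemma ev_one: "ev 1 = 1"
proof -
  have "(1::qpoly) = Poly_Mapping.single 0 1" by simp
  hence "ev 1 = 1 * ind 0" by (metis ev_single)
  thus ?thesis by (simp add: ind_def)
qed

interpretation ev_hom: comm_ring_hom ev
  by unfold_locales (simp_all add: ev_add ev_mult ev_one ev_zero)

definition emb :: "qpoly \<Rightarrow> qfun" where "emb p = Fract p 1"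

interpretation emb_hom: comm_ring_hom emb
  by unfold_locales (simp_all add: emb_def Zero_fract_def One_fract_def)

lemma emb_eq_0: "emb p = 0 \<longleftrightarrow> p = 0"
  by (simp add: emb_def Zero_fract_def eq_fract)

definition Xp :: "nat \<Rightarrow> nat \<Rightarrow> qpoly" where
  "Xp i j = Poly_Mapping.single (Poly_Mapping.single (i, j) 1) 1"

definition x0 :: "nat \<Rightarrow> nat \<Rightarrow> rat" where
  "x0 i j = (if i = 1 \<or> i = j then 1 else 0)"

definition cp :: "nat set \<Rightarrow> nat set \<Rightarrow> qpoly" where
  "cp S T = (let s = sorted_list_of_set S; t = sorted_list_of_set T
      in det (mat 3 3 (\<lambda>(a, b). Xp (s ! a) (t ! b))))"

definition c0 :: "nat set \<Rightarrow> nat set \<Rightarrow> rat" where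
  "c0 S T = (let s = sorted_list_of_set S; t = sorted_list_of_set T
      in det (mat 3 3 (\<lambda>(a, b). x0 (s ! a) (t ! b))))"

lemma emb_Xp: "emb (Xp i j) = xvar i j"
  by (simp add: emb_def Xp_def xvar_def)

lemma ev_Xp: "ev (Xp i j) = x0 i j"
  by (simp add: Xp_def ev_single ind_def x0_def)

lemma compound3_cp: "compound3 S T = emb (cp S T)"
proof -
  let ?s = "sorted_list_of_set S" and ?t = "sorted_list_of_set T"
  have "mat 3 3 (\<lambda>(a, b). xvar (?s ! a) (?t ! b)) = map_mat emb (mat 3 3 (\<lambda>(a, b). Xp (?s ! a) (?t ! b)))"
    by (rule eq_matI) (auto simp: emb_Xp)
  thus ?thesis unfolding compound3_def cp_def Let_def by simp
qed

lemma c0_cp: "c0 S T = ev (cp S T)"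
proof -
  let ?s = "sorted_list_of_set S" and ?t = "sorted_list_of_set T"
  have "mat 3 3 (\<lambda>(a, b). x0 (?s ! a) (?t ! b)) = map_mat ev (mat 3 3 (\<lambda>(a, b). Xp (?s ! a) (?t ! b)))"
    by (rule eq_matI) (auto simp: ev_Xp)
  thus ?thesis unfolding c0_def cp_def Let_def by simp
qed



lemma alg:
  fixes r c :: "nat \<Rightarrow> nat set" and k :: nat and Sel :: "nat set set" and H :: "nat set set"
  assumes fin: "finite Sel"
    and sp: "\<forall>i<k. \<exists>coef. \<forall>T\<in>H. compound3 (r i) T = (\<Sum>S'\<in>Sel. coef S' * compound3 S' T)"
    and cH: "\<forall>j<k. c j \<in> H"
    and low: "\<forall>i j. j < i \<longrightarrow> i < k \<longrightarrow> c0 (r i) (c j) = 0"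
    and diag: "\<forall>i<k. c0 (r i) (c i) \<noteq> 0"
  shows "k \<le> card Sel"
proof (rule ccontr)
  assume "\<not> k \<le> card Sel"
  hence mk: "card Sel < k" by simp
  define A0 where "A0 = mat k k (\<lambda>(i,j). c0 (r i) (c j))"
  define Ap where "Ap = mat k k (\<lambda>(i,j). cp (r i) (c j))"
  define A where "A = mat k k (\<lambda>(i,j). compound3 (r i) (c j))"
  have A0c: "A0 \<in> carrier_mat k k" unfolding A0_def by simp
  have ut: "upper_triangular A0" unfolding A0_def upper_triangular_def using low by auto
  have "det A0 = prod_list (diag_mat A0)" by (rule det_upper_triangular[OF ut A0c])
  moreover have "0 \<notin> set (diag_mat A0)" using diag unfolding diag_mat_def A0_def by auto
  ultimately have d0: "det A0 \<noteq> 0" by (simp add: prod_list_zero_iff)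
  have "A0 = map_mat ev Ap" unfolding A0_def Ap_def by (rule eq_matI) (auto simp: c0_cp)
  hence "ev (det Ap) \<noteq> 0" using d0 by simp
  hence "det Ap \<noteq> 0" by auto
  moreover have "A = map_mat emb Ap" unfolding A_def Ap_def by (rule eq_matI) (auto simp: compound3_cp)
  ultimately have dA: "det A \<noteq> 0" by (simp add: emb_eq_0)
  obtain ss where ss: "set ss = Sel" "distinct ss" using finite_distinct_list[OF fin] by blast
  define m where "m = length ss"
  have mcard: "m = card Sel" unfolding m_def using ss distinct_card by metis
  define co where "co i = (SOME coef. \<forall>T\<in>H. compound3 (r i) T = (\<Sum>S'\<in>Sel. coef S' * compound3 S' T))" for i
  have co: "\<forall>T\<in>H. compound3 (r i) T = (\<Sum>S'\<in>Sel. co i S' * compound3 S' T)" if "i < k" for i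
  proof -
    have "\<exists>coef. \<forall>T\<in>H. compound3 (r i) T = (\<Sum>S'\<in>Sel. coef S' * compound3 S' T)" using sp that by blast
    from someI_ex[OF this] show ?thesis unfolding co_def .
  qed
  define C where "C = mat k k (\<lambda>(i,l). if l < m then co i (ss ! l) else 0)"
  define B where "B = mat k k (\<lambda>(l,j). if l < m then compound3 (ss ! l) (c j) else 0)"
  have Cc: "C \<in> carrier_mat k k" and Bc: "B \<in> carrier_mat k k" unfolding C_def B_def by auto
  have bij: "bij_betw ((!) ss) {..<m} Sel" using bij_betw_nth[OF ss(2)] ss(1) m_def by auto
  have "A = C * B"
  proof (rule eq_matI)
    fix i j assume ij: "i < dim_row (C * B)" "j < dim_col (C * B)"
    hence i: "i < k" and j: "j < k" using Cc Bc by auto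
    have "(C * B) $$ (i, j) = (\<Sum>l\<in>{0..<k}. C $$ (i, l) * B $$ (l, j))"
      using i j Cc Bc by (simp add: scalar_prod_def)
    also have "\<dots> = (\<Sum>l\<in>{0..<k}. if l < m then co i (ss ! l) * compound3 (ss ! l) (c j) else 0)"
      using i j by (intro sum.cong) (auto simp: C_def B_def)
    also have "\<dots> = (\<Sum>l\<in>{..<m}. co i (ss ! l) * compound3 (ss ! l) (c j))"
    proof -
      have "{..<m} \<subseteq> {0..<k}" using mk mcard by auto
      hence e: "{0..<k} \<inter> {l. l < m} = {..<m}" by auto
      show ?thesis using sum.inter_restrict[of "{0..<k}" "\<lambda>l. co i (ss ! l) * compound3 (ss ! l) (c j)" "{l. l < m}"]
        unfolding e by simp
    qed
    also have "\<dots> = (\<Sum>S'\<in>Sel. co i S' * compound3 S' (c j))"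
      using sum.reindex_bij_betw[OF bij, of "\<lambda>S'. co i S' * compound3 S' (c j)"] by simp
    also have "\<dots> = compound3 (r i) (c j)" using co[OF i] cH j by auto
    finally show "A $$ (i, j) = (C * B) $$ (i, j)" unfolding A_def using i j by simp
  qed (use Cc Bc in \<open>auto simp: A_def\<close>)
  hence "det A = det C * det B" using det_mult[OF Cc Bc] by simp
  moreover have "det C = 0"
  proof -
    have "signof p * (\<Prod>i = 0..<k. C $$ (i, p i)) = 0" if p: "p permutes {0..<k}" for p
    proof -
      have mk': "m \<in> {0..<k}" using mk mcard by auto
      let ?i = "inv_into UNIV p m"
      have "?i \<in> {0..<k}" using permutes_in_image[OF permutes_inv[OF p]] mk' by simp
      moreover have "p ?i = m" using permutes_inverses(1)[OF p] by simp
      ultimately have "C $$ (?i, p ?i) = 0" unfolding C_def using mk mcard by auto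
      hence "(\<Prod>i = 0..<k. C $$ (i, p i)) = 0" using \<open>?i \<in> {0..<k}\<close>
        by (intro prod_zero) auto
      thus ?thesis by (simp only: mult_zero_right)
    qed
    thus ?thesis unfolding det_def'[OF Cc] by (intro sum.neutral) auto
  qed
  ultimately show False using dA by simp
qed



lemma spec3:
  assumes a: "2 \<le> a" "a < b" and T: "finite T" "card T = 3"
  shows "c0 {1,a,b} T \<noteq> 0 \<longleftrightarrow> {a,b} \<subseteq> T"
proof -
  have s: "sorted_list_of_set {1,a,b} = [1,a,b]"
    by (subst sorted_list_of_set_unique[symmetric]) (use a in auto)
  define t where "t = sorted_list_of_set T"
  have lt: "length t = 3" unfolding t_def using T by simp
  have st: "sorted_wrt (<) t" unfolding t_def by simp
  have setT: "set t = T" unfolding t_def using T by simp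
  obtain x y z where t: "t = [x,y,z]" using lt
    by (metis (no_types, opaque_lifting) length_0_conv length_Suc_conv numeral_3_eq_3)
  have xyz: "x < y" "y < z" using st t by auto
  have T': "T = {x,y,z}" using setT t by auto
  have a1: "a \<noteq> 1" "b \<noteq> 1" using a by auto
  have c: "c0 {1,a,b} T = x0 1 x * x0 a y * x0 b z - x0 1 x * x0 a z * x0 b y - x0 1 y * x0 a x * x0 b z
     + x0 1 y * x0 a z * x0 b x + x0 1 z * x0 a x * x0 b y - x0 1 z * x0 a y * x0 b x"
    unfolding c0_def Let_def s t_def[symmetric] t by (subst det3) (simp_all add: numeral_2_eq_2)
  have x1: "x0 1 j = 1" for j by (simp add: x0_def)
  have xa: "x0 a j = (if a = j then 1 else 0)" for j using a1 by (simp add: x0_def)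
  have xb: "x0 b j = (if b = j then 1 else 0)" for j using a1 by (simp add: x0_def)
  show ?thesis
  proof (cases "a \<in> T \<and> b \<in> T")
    case False
    hence "(\<forall>j\<in>T. x0 a j = 0) \<or> (\<forall>j\<in>T. x0 b j = 0)" unfolding xa xb by auto
    moreover have "x \<in> T" "y \<in> T" "z \<in> T" using T' by auto
    ultimately have "c0 {1,a,b} T = 0" unfolding c by auto
    thus ?thesis using False by auto
  next
    case True
    hence "(a = x \<and> b = y) \<or> (a = x \<and> b = z) \<or> (a = y \<and> b = z)" using T' xyz a by auto
    hence "c0 {1,a,b} T \<noteq> 0" unfolding c x1 xa xb using xyz by auto
    thus ?thesis using True by auto
  qed
qed



definition Ed :: "nat set set \<Rightarrow> nat set \<Rightarrow> nat \<Rightarrow> nat \<Rightarrow> nat \<Rightarrow> bool" where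
  "Ed H U u x y \<longleftrightarrow> x \<in> U \<and> y \<in> U \<and> x \<noteq> u \<and> y \<noteq> u \<and> x \<noteq> y \<and> {x,y,u} \<in> H"

lemma Ed_sym: "Ed H U u x y \<Longrightarrow> Ed H U u y x"
  unfolding Ed_def by (auto simp: insert_commute)

lemma reach_sym: assumes "(Ed H U u)\<^sup>*\<^sup>* a b" shows "(Ed H U u)\<^sup>*\<^sup>* b a"
  using assms
proof (induction rule: rtranclp_induct)
  case base thus ?case by simp
next
  case (step y z)
  hence "Ed H U u z y" by (simp add: Ed_sym)
  thus ?case using step.IH by (meson converse_rtranclp_into_rtranclp)
qed

lemma reach_edge: "{x,y,u} \<in> H \<Longrightarrow> x \<in> U \<Longrightarrow> y \<in> U \<Longrightarrow> x \<noteq> u \<Longrightarrow> y \<noteq> u \<Longrightarrow> x \<noteq> y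
   \<Longrightarrow> (Ed H U u)\<^sup>*\<^sup>* x y"
  by (rule r_into_rtranclp) (simp add: Ed_def)

lemma nadj: "\<not> (Ed H U u)\<^sup>*\<^sup>* x y \<Longrightarrow> x \<in> U \<Longrightarrow> y \<in> U \<Longrightarrow> x \<noteq> u \<Longrightarrow> y \<noteq> u \<Longrightarrow> {x,y,u} \<notin> H"
  using reach_edge[of x y u H U] by (cases "x = y") auto

lemma four4:
  assumes h4: "\<forall>A. A \<subseteq> U \<and> card A = 4 \<longrightarrow> (\<exists>F\<in>H. F \<subseteq> A)"
    and hc: "\<forall>F\<in>H. card F = 3"
    and in4: "p \<in> U" "q \<in> U" "r \<in> U" "s \<in> U"
    and dist: "p \<noteq> q" "p \<noteq> r" "p \<noteq> s" "q \<noteq> r" "q \<noteq> s" "r \<noteq> s"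
    and n1: "{p,q,r} \<notin> H" and n2: "{p,q,s} \<notin> H" and n3: "{p,r,s} \<notin> H"
  shows "{q,r,s} \<in> H"
proof -
  let ?A = "{p,q,r,s}"
  have cA: "card ?A = 4" using dist by auto
  obtain F where F: "F \<in> H" "F \<subseteq> ?A" using h4 cA in4 by (metis empty_subsetI insert_subset)
  have cF: "card F = 3" using hc F by auto
  have "F \<noteq> ?A" using cF cA by auto
  then obtain w where w: "w \<in> ?A" "w \<notin> F" using F by blast
  have sub: "F \<subseteq> ?A - {w}" using F w by auto
  have "card (?A - {w}) = 3" using cA w by simp
  hence FA: "F = ?A - {w}" using sub cF by (metis card_subset_eq finite.emptyI finite.insertI finite_Diff)
  show ?thesis
  proof -
    have "w = p \<or> w = q \<or> w = r \<or> w = s" using w by auto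
    moreover have "w \<noteq> q" proof assume "w = q" hence "F = {p,r,s}" using FA dist by auto
      thus False using F n3 by simp qed
    moreover have "w \<noteq> r" proof assume "w = r" hence "F = {p,q,s}" using FA dist by auto
      thus False using F n2 by simp qed
    moreover have "w \<noteq> s" proof assume "w = s" hence "F = {p,q,r}" using FA dist by auto
      thus False using F n1 by simp qed
    ultimately have "w = p" by blast
    hence "F = {q,r,s}" using FA dist by auto
    thus ?thesis using F by simp
  qed
qed



lemma good_vertex:
  assumes h4: "\<forall>A. A \<subseteq> U \<and> card A = 4 \<longrightarrow> (\<exists>F\<in>H. F \<subseteq> A)"
    and hc: "\<forall>F\<in>H. card F = 3"
    and U: "1 \<in> U" "u0 \<in> U" "u0 \<noteq> 1"
  shows "\<exists>u\<in>U. u \<noteq> 1 \<and> (\<exists>f\<in>U. f \<noteq> u \<and>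
           (\<forall>z\<in>U-{u}. (Ed H U u)\<^sup>*\<^sup>* 1 z \<or> (Ed H U u)\<^sup>*\<^sup>* f z))"
proof (cases "\<forall>z\<in>U-{u0}. (Ed H U u0)\<^sup>*\<^sup>* 1 z")
  case True
  have "u0 \<in> U \<and> u0 \<noteq> 1 \<and> 1 \<in> U \<and> 1 \<noteq> u0 \<and> (\<forall>z\<in>U-{u0}. (Ed H U u0)\<^sup>*\<^sup>* 1 z \<or> (Ed H U u0)\<^sup>*\<^sup>* 1 z)" using True U by auto
  thus ?thesis by blast
next
  case False
  let ?R = "(Ed H U u0)\<^sup>*\<^sup>*"
  from False obtain x where x: "x \<in> U" "x \<noteq> u0" "\<not> ?R 1 x" by blast
  show ?thesis
  proof (cases "\<forall>z\<in>U-{u0}. ?R 1 z \<or> ?R x z")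
    case True
    have "u0 \<in> U \<and> u0 \<noteq> 1 \<and> x \<in> U \<and> x \<noteq> u0 \<and> (\<forall>z\<in>U-{u0}. ?R 1 z \<or> ?R x z)" using True U x by auto
    thus ?thesis by blast
  next
    case False
    then obtain y where y: "y \<in> U" "y \<noteq> u0" "\<not> ?R 1 y" "\<not> ?R x y" by blast
    have x1: "x \<noteq> 1" using x by auto
    have xy: "x \<noteq> y" using y by auto
    have y1: "y \<noteq> 1" using y by auto
    let ?S = "(Ed H U x)\<^sup>*\<^sup>*"
    have n_xy: "{u0,x,y} \<notin> H" using nadj[OF y(4) x(1) y(1) x(2) y(2)] by (simp add: insert_commute)
    have n_x1: "{u0,x,1} \<notin> H" using nadj[OF x(3) U(1) x(1) U(3)[symmetric] x(2)] by (simp add: insert_commute)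
    have n_y1: "{u0,y,1} \<notin> H" using nadj[OF y(3) U(1) y(1) U(3)[symmetric] y(2)] by (simp add: insert_commute)
    have "{x,y,1} \<in> H"
      by (rule four4[OF h4 hc U(2) x(1) y(1) U(1)]) (use x y x1 xy y1 U n_xy n_x1 n_y1 in auto)
    hence S1y: "?S 1 y" using reach_edge[of 1 y x H U] x1 xy y1 U y by (simp add: insert_commute)
    have "\<forall>z\<in>U-{x}. ?S 1 z \<or> ?S u0 z"
    proof
      fix z assume z: "z \<in> U - {x}"
      show "?S 1 z \<or> ?S u0 z"
      proof (cases "z = u0 \<or> z = 1 \<or> z = y")
        case True thus ?thesis using S1y by auto
      next
        case False
        hence zz: "z \<noteq> u0" "z \<noteq> 1" "z \<noteq> y" "z \<noteq> x" "z \<in> U" using z by auto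
        show ?thesis
        proof (cases "?R x z")
          case True
          show ?thesis
          proof (cases "{x,z,u0} \<in> H")
            case True
            hence "?S z u0" using reach_edge[of z u0 x H U] zz x U by (simp add: insert_commute)
            thus ?thesis using reach_sym by metis
          next
            case False
            have n1: "{u0,x,z} \<notin> H" using False by (simp add: insert_commute)
            have "\<not> ?R z y" using True y(4) by (meson rtranclp_trans)
            hence n2: "{u0,z,y} \<notin> H" using nadj[of H U u0 z y] zz y by (simp add: insert_commute)
            have "{x,z,y} \<in> H"
              by (rule four4[OF h4 hc U(2) x(1) zz(5) y(1)]) (use x y zz xy U n1 n_xy n2 in \<open>auto simp: insert_commute\<close>)
            hence "?S y z" using reach_edge[of y z x H U] zz x y xy by (simp add: insert_commute)
            thus ?thesis using S1y by (meson rtranclp_trans)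
          qed
        next
          case nxz: False
          have n1: "{u0,x,z} \<notin> H" using nadj[OF nxz x(1) zz(5) x(2) zz(1)] by (simp add: insert_commute)
          show ?thesis
          proof (cases "?R 1 z")
            case False
            have n2: "{u0,z,1} \<notin> H" using nadj[OF False U(1) zz(5) U(3)[symmetric] zz(1)] by (simp add: insert_commute)
            have "{x,z,1} \<in> H"
              by (rule four4[OF h4 hc U(2) x(1) zz(5) U(1)]) (use x zz x1 U n1 n_x1 n2 in \<open>auto simp: insert_commute\<close>)
            hence "?S 1 z" using reach_edge[of 1 z x H U] zz x x1 U by (simp add: insert_commute)
            thus ?thesis by simp
          next
            case True
            have "\<not> ?R z y" using True y(3) by (meson rtranclp_trans)
            hence n2: "{u0,z,y} \<notin> H" using nadj[of H U u0 z y] zz y by (simp add: insert_commute)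
            have "{x,z,y} \<in> H"
              by (rule four4[OF h4 hc U(2) x(1) zz(5) y(1)]) (use x y zz xy U n1 n_xy n2 in \<open>auto simp: insert_commute\<close>)
            hence "?S y z" using reach_edge[of y z x H U] zz x y xy by (simp add: insert_commute)
            thus ?thesis using S1y by (meson rtranclp_trans)
          qed
        qed
      qed
    qed
    hence "x \<in> U \<and> x \<noteq> 1 \<and> u0 \<in> U \<and> u0 \<noteq> x \<and> (\<forall>z\<in>U-{x}. ?S 1 z \<or> ?S u0 z)" using x x1 U by auto
    thus ?thesis by blast
  qed
qed



lemma escape:
  assumes "r\<^sup>*\<^sup>* a y" "a \<in> Z" "y \<notin> Z"
  shows "\<exists>w x. w \<in> Z \<and> x \<notin> Z \<and> r w x"
  using assms
proof (induction rule: rtranclp_induct)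
  case base thus ?case by simp
next
  case (step y' y)
  show ?case
  proof (cases "y' \<in> Z")
    case True thus ?thesis using step by blast
  next
    case False thus ?thesis using step by blast
  qed
qed

lemma bfs_aux:
  assumes fin: "finite W" and RW: "R \<subseteq> W"
    and reach: "\<forall>x\<in>W. \<exists>r\<in>R. E\<^sup>*\<^sup>* r x"
    and EW: "\<forall>x y. E x y \<longrightarrow> x \<in> W \<and> y \<in> W"
  shows "n \<le> card (W - R) \<Longrightarrow> \<exists>L. length L = n \<and> distinct L \<and> set L \<subseteq> W - R \<and>
     (\<forall>i<length L. \<exists>w. E w (L!i) \<and> (w \<in> R \<or> w \<in> set (take i L)))"
proof (induction n)
  case 0 thus ?case by auto
next
  case (Suc n)
  then obtain L where L: "length L = n" "distinct L" "set L \<subseteq> W - R"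
     "\<forall>i<length L. \<exists>w. E w (L!i) \<and> (w \<in> R \<or> w \<in> set (take i L))" by auto
  have "card (set L) = n" using L distinct_card by metis
  hence "set L \<noteq> W - R" using Suc.prems by auto
  then obtain y where y: "y \<in> W - R" "y \<notin> set L" using L by blast
  then obtain r where r: "r \<in> R" "E\<^sup>*\<^sup>* r y" using reach by blast
  obtain w x where wx: "w \<in> R \<union> set L" "x \<notin> R \<union> set L" "E w x"
    using escape[OF r(2), of "R \<union> set L"] r y by blast
  have xW: "x \<in> W" using EW wx by blast
  let ?L = "L @ [x]"
  have "\<forall>i<length ?L. \<exists>w. E w (?L!i) \<and> (w \<in> R \<or> w \<in> set (take i ?L))"
  proof (intro allI impI)
    fix i assume i: "i < length ?L"
    show "\<exists>w. E w (?L!i) \<and> (w \<in> R \<or> w \<in> set (take i ?L))"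
    proof (cases "i < length L")
      case True thus ?thesis using L(4) by (auto simp: nth_append)
    next
      case False hence "i = length L" using i by simp
      thus ?thesis using wx by auto
    qed
  qed
  thus ?case using L wx xW by (intro exI[of _ ?L]) auto
qed

lemma bfs:
  assumes fin: "finite W" and RW: "R \<subseteq> W"
    and reach: "\<forall>x\<in>W. \<exists>r\<in>R. E\<^sup>*\<^sup>* r x"
    and EW: "\<forall>x y. E x y \<longrightarrow> x \<in> W \<and> y \<in> W"
  shows "\<exists>L. distinct L \<and> set L = W - R \<and>
     (\<forall>i<length L. \<exists>w. E w (L!i) \<and> (w \<in> R \<or> w \<in> set (take i L)))"
proof -
  obtain L where L: "length L = card (W - R)" "distinct L" "set L \<subseteq> W - R"
     "\<forall>i<length L. \<exists>w. E w (L!i) \<and> (w \<in> R \<or> w \<in> set (take i L))"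
    using bfs_aux[OF assms, of "card (W - R)"] by auto
  have "set L = W - R" using L fin by (metis card_subset_eq distinct_card finite_Diff)
  thus ?thesis using L by blast
qed



lemma comb:
  fixes H :: "nat set set" and U0 :: "nat set"
  assumes h4: "\<forall>A. A \<subseteq> U0 \<and> card A = 4 \<longrightarrow> (\<exists>F\<in>H. F \<subseteq> A)"
    and hc: "\<forall>F\<in>H. card F = 3"
  shows "finite V \<Longrightarrow> 1 \<notin> V \<Longrightarrow> insert 1 V \<subseteq> U0 \<Longrightarrow> card V = k \<Longrightarrow>
    \<exists>ps \<tau>. distinct ps \<and> (\<forall>p\<in>set ps. p \<subseteq> V \<and> card p = 2) \<and> (k - 1) choose 2 \<le> length ps \<and>
      (\<forall>p\<in>set ps. \<tau> p \<in> H \<and> p \<subseteq> \<tau> p \<and> \<tau> p \<subseteq> insert 1 V) \<and>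
      (\<forall>i j. i < j \<longrightarrow> j < length ps \<longrightarrow> \<not> ps!j \<subseteq> \<tau> (ps!i))"
proof (induction k arbitrary: V)
  case 0 thus ?case by (intro exI[of _ "[]"]) auto
next
  case (Suc k)
  show ?case
  proof (cases "k \<le> 1")
    case True
    hence "(Suc k - 1) choose 2 = 0" by (cases k) auto
    thus ?thesis by (intro exI[of _ "[]"]) auto
  next
    case False
    hence k2: "k \<ge> 2" by simp
    define U where "U = insert 1 V"
    have finU: "finite U" using Suc.prems U_def by simp
    have h4U: "\<forall>A. A \<subseteq> U \<and> card A = 4 \<longrightarrow> (\<exists>F\<in>H. F \<subseteq> A)"
    proof (intro allI impI)
      fix A assume A: "A \<subseteq> U \<and> card A = 4"
      hence "A \<subseteq> U0" using Suc.prems(3) unfolding U_def by (meson subset_trans)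
      thus "\<exists>F\<in>H. F \<subseteq> A" using h4 A by simp
    qed
    obtain u0 where u0: "u0 \<in> V" using Suc.prems(4) by (metis card.empty ex_in_conv nat.distinct(1))
    have u0U: "u0 \<in> U" "u0 \<noteq> 1" using u0 Suc.prems(2) U_def by auto
    obtain u f where u: "u \<in> U" "u \<noteq> 1" and f: "f \<in> U" "f \<noteq> u"
      and cov: "\<forall>z\<in>U-{u}. (Ed H U u)\<^sup>*\<^sup>* 1 z \<or> (Ed H U u)\<^sup>*\<^sup>* f z"
      using good_vertex[OF h4U hc _ u0U(1) u0U(2)] U_def by auto
    have uV: "u \<in> V" using u U_def by auto
    define V' where "V' = V - {u}"
    have V'props: "finite V'" "1 \<notin> V'" "insert 1 V' \<subseteq> U0" "card V' = k"
    proof -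
      show "finite V'" using Suc.prems(1) unfolding V'_def by simp
      show "1 \<notin> V'" using Suc.prems(2) unfolding V'_def by simp
      show "insert 1 V' \<subseteq> U0" using Suc.prems(3) unfolding V'_def by blast
      show "card V' = k" using Suc.prems(4) uV Suc.prems(1) card_Diff_singleton[OF uV] unfolding V'_def by simp
    qed
    obtain ps' \<tau>' where ps': "distinct ps'" "\<forall>p\<in>set ps'. p \<subseteq> V' \<and> card p = 2"
      "(k - 1) choose 2 \<le> length ps'"
      "\<forall>p\<in>set ps'. \<tau>' p \<in> H \<and> p \<subseteq> \<tau>' p \<and> \<tau>' p \<subseteq> insert 1 V'"
      "\<forall>i j. i < j \<longrightarrow> j < length ps' \<longrightarrow> \<not> ps'!j \<subseteq> \<tau>' (ps'!i)"
      using Suc.IH[OF V'props] by (elim exE conjE) (rule that; assumption)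
    define W where "W = U - {u}"
    define R where "R = {1, f}"
    define E where "E = Ed H U u"
    have RW: "R \<subseteq> W" unfolding R_def W_def using u f U_def by simp
    have reachW: "\<forall>x\<in>W. \<exists>r\<in>R. E\<^sup>*\<^sup>* r x" using cov unfolding W_def R_def E_def by blast
    have EW: "\<forall>x y. E x y \<longrightarrow> x \<in> W \<and> y \<in> W" unfolding E_def Ed_def W_def by auto
    obtain L where L: "distinct L" "set L = W - R"
      "\<forall>i<length L. \<exists>w. E w (L!i) \<and> (w \<in> R \<or> w \<in> set (take i L))"
      using bfs[OF _ RW reachW EW] finU unfolding W_def by blast
    have LV: "\<forall>b\<in>set L. b \<in> V \<and> b \<noteq> u \<and> b \<noteq> 1" using L(2) unfolding W_def R_def U_def by auto
    define wp where "wp p = (SOME w. \<exists>i<length L. p = {L!i, u} \<and> E w (L!i) \<and> (w \<in> R \<or> w \<in> set (take i L)))" for p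
    have wp: "E (wp {L!i,u}) (L!i) \<and> (wp {L!i,u} \<in> R \<or> wp {L!i,u} \<in> set (take i L))" if i: "i < length L" for i
    proof -
      obtain w where w: "E w (L!i)" "w \<in> R \<or> w \<in> set (take i L)" using L(3) i by blast
      have "\<exists>w. \<exists>i'<length L. {L!i, u} = {L!i', u} \<and> E w (L!i') \<and> (w \<in> R \<or> w \<in> set (take i' L))"
        using w i by blast
      from someI_ex[OF this] obtain i' where i': "i' < length L" "{L!i, u} = {L!i', u}"
        "E (wp {L!i,u}) (L!i')" "wp {L!i,u} \<in> R \<or> wp {L!i,u} \<in> set (take i' L)"
        unfolding wp_def by blast
      have "L!i \<noteq> u" "L!i' \<noteq> u" using LV i i'(1) by (auto dest: nth_mem)
      hence "L!i = L!i'" using i'(2) by (auto simp: doubleton_eq_iff)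
      hence "i = i'" using L(1) i i'(1) by (simp add: nth_eq_iff_index_eq)
      thus ?thesis using i' by simp
    qed
    define qs where "qs = map (\<lambda>b. {b, u}) L"
    define ps where "ps = ps' @ qs"
    define \<tau> where "\<tau> p = (if u \<in> p then insert (wp p) p else \<tau>' p)" for p
    have oldu: "u \<notin> p" if "p \<in> set ps'" for p using ps'(2) that V'_def by auto
    have old\<tau>u: "u \<notin> \<tau>' p" if "p \<in> set ps'" for p using ps'(4) that V'_def Suc.prems(2) u by auto
    have qsi: "qs!i = {L!i, u}" if "i < length L" for i using that qs_def by simp
    have lq: "length qs = length L" using qs_def by simp
    have injq: "inj_on (\<lambda>b. {b, u}) (set L)" using LV by (auto simp: inj_on_def doubleton_eq_iff)
    have dq: "distinct qs" unfolding qs_def using L(1) injq by (simp add: distinct_map)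
    have dps: "distinct ps" unfolding ps_def using ps'(1) dq oldu by (auto simp: qs_def)
    have pairs: "\<forall>p\<in>set ps. p \<subseteq> V \<and> card p = 2"
      using ps'(2) LV uV unfolding ps_def qs_def V'_def by auto
    have cW: "card W = Suc k" unfolding W_def U_def using Suc.prems u uV by (simp add: card_insert_if)
    have cR: "card R \<le> 2" unfolding R_def by (simp add: card_insert_if)
    have "card (W - R) = card W - card R" using RW finU W_def by (simp add: card_Diff_subset finite_subset)
    moreover have "length L = card (W - R)" using L(1) L(2) distinct_card by metis
    ultimately have cL: "length L \<ge> k - 1" using cW cR by linarith
    have ch: "(Suc k - 1) choose 2 = ((k - 1) choose 2) + (k - 1)"
    proof -
      have "k choose 2 = ((k - 1) choose (2 - 1)) + ((k - 1) choose 2)" using k2 choose_reduce_nat[of k 2] by simp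
      thus ?thesis by simp
    qed
    have len: "(Suc k - 1) choose 2 \<le> length ps" unfolding ps_def ch using ps'(3) cL lq by simp
    have taup: "\<forall>p\<in>set ps. \<tau> p \<in> H \<and> p \<subseteq> \<tau> p \<and> \<tau> p \<subseteq> insert 1 V"
    proof
      fix p assume p: "p \<in> set ps"
      show "\<tau> p \<in> H \<and> p \<subseteq> \<tau> p \<and> \<tau> p \<subseteq> insert 1 V"
      proof (cases "p \<in> set ps'")
        case True thus ?thesis using ps'(4) oldu[OF True] unfolding \<tau>_def V'_def by auto
      next
        case False
        then obtain i where i: "i < length L" "p = {L!i, u}" using p unfolding ps_def qs_def
          by (auto simp: in_set_conv_nth)
        have w: "E (wp p) (L!i)" using wp[OF i(1)] i(2) by simp
        hence "{wp p, L!i, u} \<in> H" "wp p \<in> U" "L!i \<in> U" unfolding E_def Ed_def by auto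
        thus ?thesis unfolding \<tau>_def using i(2) uV U_def by auto
      qed
    qed
    have tri: "\<forall>i j. i < j \<longrightarrow> j < length ps \<longrightarrow> \<not> ps!j \<subseteq> \<tau> (ps!i)"
    proof (intro allI impI)
      fix i j assume ij: "i < j" "j < length ps"
      show "\<not> ps!j \<subseteq> \<tau> (ps!i)"
      proof (cases "j < length ps'")
        case True
        hence "ps!j = ps'!j" "ps!i = ps'!i" using ij unfolding ps_def by (auto simp: nth_append)
        moreover have "u \<notin> ps'!i" using oldu ij True by auto
        ultimately show ?thesis using ps'(5) ij True unfolding \<tau>_def by auto
      next
        case jF: False
        define j' where "j' = j - length ps'"
        have j': "j' < length L" "ps!j = {L!j', u}" using ij jF lq unfolding ps_def j'_def
          by (auto simp: nth_append qsi)
        show ?thesis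
        proof (cases "i < length ps'")
          case True
          hence "ps!i = ps'!i" unfolding ps_def by (simp add: nth_append)
          moreover have "ps'!i \<in> set ps'" using True by simp
          ultimately have "\<tau> (ps!i) = \<tau>' (ps'!i)" "u \<notin> \<tau>' (ps'!i)" unfolding \<tau>_def using oldu old\<tau>u by auto
          thus ?thesis using j' by auto
        next
          case iF: False
          define i' where "i' = i - length ps'"
          have i': "i' < length L" "ps!i = {L!i', u}" "i' < j'" using ij iF jF lq unfolding ps_def i'_def j'_def
            by (auto simp: nth_append qsi)
          have t: "\<tau> (ps!i) = insert (wp {L!i', u}) {L!i', u}" unfolding \<tau>_def i' by simp
          show ?thesis
          proof
            assume sub: "ps!j \<subseteq> \<tau> (ps!i)"
            have "L!j' \<noteq> L!i'" using L(1) i' j' by (simp add: nth_eq_iff_index_eq)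
            moreover have "L!j' \<noteq> u" using LV j' by (auto dest: nth_mem)
            ultimately have e: "L!j' = wp {L!i', u}" using sub t j' by auto
            have "L!j' \<notin> R" using L(2) j' by (auto dest: nth_mem)
            hence "L!j' \<in> set (take i' L)" using wp[OF i'(1)] e by auto
            then obtain m where m: "m < i'" "L!m = L!j'" using i' by (auto simp: in_set_conv_nth)
            have "m = j'" using L(1) m i' j' by (simp add: nth_eq_iff_index_eq)
            thus False using m i' by simp
          qed
        qed
      qed
    qed
    show ?thesis using dps pairs len taup tri by blast
  qed
qed



definition spans :: "nat set set \<Rightarrow> nat set set \<Rightarrow> nat set \<Rightarrow> bool" where
  "spans H Sel S \<longleftrightarrow> (\<exists>coef. \<forall>T\<in>H. compound3 S T = (\<Sum>S'\<in>Sel. coef S' * compound3 S' T))"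

lemma g_mono: "Sel \<subseteq> greedy H Sel L"
  by (induction L arbitrary: Sel) (auto, blast)

lemma g_sub: "greedy H Sel L \<subseteq> Sel \<union> set L"
proof (induction L arbitrary: Sel)
  case Nil show ?case by simp
next
  case (Cons a L)
  show ?case using Cons.IH[of "if row_indep H Sel a then insert a Sel else Sel"] by auto
qed

lemma g_app: "greedy H Sel (L1 @ L2) = greedy H (greedy H Sel L1) L2"
  by (induction L1 arbitrary: Sel) auto

lemma spans_mono: assumes "finite B" "A \<subseteq> B" "spans H A S" shows "spans H B S"
proof -
  obtain coef where c: "\<forall>T\<in>H. compound3 S T = (\<Sum>S'\<in>A. coef S' * compound3 S' T)"
    using assms(3) unfolding spans_def by blast
  define coef' where "coef' x = (if x \<in> A then coef x else 0)" for x
  have "(\<Sum>S'\<in>B. coef' S' * compound3 S' T) = (\<Sum>S'\<in>A. coef S' * compound3 S' T)" for T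
  proof -
    have "(\<Sum>S'\<in>B. coef' S' * compound3 S' T) = (\<Sum>S'\<in>B. if S' \<in> A then coef S' * compound3 S' T else 0)"
      unfolding coef'_def by (intro sum.cong) auto
    also have "\<dots> = (\<Sum>S'\<in>B \<inter> A. coef S' * compound3 S' T)"
      using sum.inter_restrict[OF assms(1), symmetric] by simp
    also have "B \<inter> A = A" using assms(2) by blast
    finally show ?thesis .
  qed
  thus ?thesis using c unfolding spans_def by (intro exI[of _ coef']) simp
qed

lemma spans_self: assumes "finite Sel" "S \<in> Sel" shows "spans H Sel S"
proof -
  have "compound3 S T = (\<Sum>S'\<in>Sel. (if S' = S then 1 else 0) * compound3 S' T)" for T
  proof -
    have "(\<Sum>S'\<in>Sel. (if S' = S then 1 else 0) * compound3 S' T) = (\<Sum>S'\<in>Sel. if S' = S then compound3 S' T else 0)"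
      by (intro sum.cong) auto
    thus ?thesis using assms by (simp add: sum.delta)
  qed
  thus ?thesis unfolding spans_def by (intro exI[of _ "\<lambda>S'. if S' = S then 1 else 0"]) auto
qed

lemma greedy_span:
  assumes fin: "finite Sel0" and L: "L = L1 @ S # L2" and P: "P S"
    and PL: "\<forall>T\<in>Sel0 \<union> set L1. P T"
  shows "spans H {F \<in> greedy H Sel0 L. P F} S"
proof -
  define Sel1 where "Sel1 = greedy H Sel0 L1"
  have s1: "Sel1 \<subseteq> Sel0 \<union> set L1" unfolding Sel1_def by (rule g_sub)
  hence P1: "\<forall>T\<in>Sel1. P T" using PL by blast
  have f1: "finite Sel1" using s1 fin by (meson finite_Un finite_set finite_subset)
  define Sel2 where "Sel2 = (if row_indep H Sel1 S then insert S Sel1 else Sel1)"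
  have res: "greedy H Sel0 L = greedy H Sel2 L2" unfolding L g_app Sel1_def[symmetric] Sel2_def by simp
  have sp2: "spans H Sel2 S"
  proof (cases "row_indep H Sel1 S")
    case True thus ?thesis unfolding Sel2_def using f1 by (simp add: spans_self)
  next
    case False thus ?thesis unfolding Sel2_def spans_def row_indep_def by simp
  qed
  have P2: "\<forall>T\<in>Sel2. P T" using P1 P unfolding Sel2_def by auto
  have sub: "Sel2 \<subseteq> {F \<in> greedy H Sel0 L. P F}" unfolding res using g_mono[of Sel2 H L2] P2 by blast
  have "finite (greedy H Sel0 L)" using g_sub[of H Sel0 L] fin by (meson finite_Un finite_set finite_subset)
  hence fin2: "finite {F \<in> greedy H Sel0 L. P F}" by simp
  show ?thesis by (rule spans_mono[OF fin2 sub sp2])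
qed

lemma lexless_char:
  assumes "finite S" "finite T"
  shows "lexless S T \<longleftrightarrow> (\<exists>a. a \<in> S \<and> a \<notin> T \<and> (\<forall>x<a. x \<in> S \<longleftrightarrow> x \<in> T))"
proof
  assume l: "lexless S T"
  let ?D = "(S - T) \<union> (T - S)"
  have fD: "finite ?D" using assms by simp
  have ne: "?D \<noteq> {}" using l unfolding lexless_def by blast
  let ?a = "Min ?D"
  have aD: "?a \<in> ?D" using Min_in[OF fD ne] .
  have aS: "?a \<in> S" using l unfolding lexless_def by blast
  have "\<forall>x<?a. x \<in> S \<longleftrightarrow> x \<in> T"
  proof (intro allI impI)
    fix x assume "x < ?a"
    hence "x \<notin> ?D" using Min_le[OF fD] by (meson not_le)
    thus "x \<in> S \<longleftrightarrow> x \<in> T" by blast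
  qed
  thus "\<exists>a. a \<in> S \<and> a \<notin> T \<and> (\<forall>x<a. x \<in> S \<longleftrightarrow> x \<in> T)" using aS aD by blast
next
  assume "\<exists>a. a \<in> S \<and> a \<notin> T \<and> (\<forall>x<a. x \<in> S \<longleftrightarrow> x \<in> T)"
  then obtain a where a: "a \<in> S" "a \<notin> T" "\<forall>x<a. x \<in> S \<longleftrightarrow> x \<in> T" by blast
  let ?D = "(S - T) \<union> (T - S)"
  have fD: "finite ?D" using assms by simp
  have aD: "a \<in> ?D" using a by blast
  have "\<forall>y\<in>?D. a \<le> y" using a by (meson UnE DiffE not_le)
  hence "Min ?D = a" using aD fD by (intro Min_eqI) auto
  thus "lexless S T" unfolding lexless_def using a by auto
qed

lemma lex_trans: assumes "finite S" "finite T" "finite U" "lexless S T" "lexless T U" shows "lexless S U"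
proof -
  obtain a where a: "a \<in> S" "a \<notin> T" "\<forall>x<a. x \<in> S \<longleftrightarrow> x \<in> T" using assms lexless_char by blast
  obtain b where b: "b \<in> T" "b \<notin> U" "\<forall>x<b. x \<in> T \<longleftrightarrow> x \<in> U" using assms lexless_char by blast
  have "a \<noteq> b" using a b by blast
  hence "a < b \<or> b < a" by arith
  hence "\<exists>c. c \<in> S \<and> c \<notin> U \<and> (\<forall>x<c. x \<in> S \<longleftrightarrow> x \<in> U)"
  proof
    assume "a < b" thus ?thesis using a b by (intro exI[of _ a]) auto
  next
    assume "b < a" thus ?thesis using a b by (intro exI[of _ b]) auto
  qed
  thus ?thesis using lexless_char assms by blast
qed

lemma lex_total: assumes "finite S" "finite T" "S \<noteq> T" shows "lexless S T \<or> lexless T S"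
proof -
  let ?D = "(S - T) \<union> (T - S)"
  have "?D \<noteq> {}" using assms by blast
  hence m: "Min ?D \<in> ?D" using assms by (intro Min_in) auto
  have e: "(T - S) \<union> (S - T) = ?D" by blast
  show ?thesis
  proof (cases "Min ?D \<in> S")
    case True thus ?thesis unfolding lexless_def using assms by auto
  next
    case False hence "Min ?D \<in> T" using m by blast
    thus ?thesis unfolding lexless_def e using assms by auto
  qed
qed

lemma lex_irrefl: "\<not> lexless S S" unfolding lexless_def by simp

lemma sorted_exists:
  assumes "finite A" "\<forall>S\<in>A. finite S"
  shows "\<exists>L. distinct L \<and> set L = A \<and> sorted_wrt lexless L"
  using assms
proof (induction A rule: finite_induct)
  case empty thus ?case by auto
next
  case (insert x F)
  then obtain L where L: "distinct L" "set L = F" "sorted_wrt lexless L" by auto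
  have fx: "finite x" using insert by auto
  have fF: "\<forall>S\<in>F. finite S" using insert by auto
  define L1 where "L1 = filter (\<lambda>y. lexless y x) L"
  define L2 where "L2 = filter (\<lambda>y. lexless x y) L"
  have d12: "set L1 \<inter> set L2 = {}"
  proof (rule ccontr)
    assume "set L1 \<inter> set L2 \<noteq> {}"
    then obtain y where y: "y \<in> set L" "lexless y x" "lexless x y" unfolding L1_def L2_def by auto
    hence "lexless y y" using lex_trans[of y x y] fx fF L(2) by auto
    thus False using lex_irrefl by blast
  qed
  have dist: "distinct (L1 @ x # L2)" using L d12 insert(2) unfolding L1_def L2_def by auto
  have setL: "set (L1 @ x # L2) = insert x F"
  proof
    show "set (L1 @ x # L2) \<subseteq> insert x F" using L(2) unfolding L1_def L2_def by auto
    show "insert x F \<subseteq> set (L1 @ x # L2)"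
    proof
      fix y assume y: "y \<in> insert x F"
      show "y \<in> set (L1 @ x # L2)"
      proof (cases "y = x")
        case True thus ?thesis by simp
      next
        case False
        hence yF: "y \<in> F" using y by simp
        hence "lexless y x \<or> lexless x y" using lex_total[of y x] fx fF False by blast
        thus ?thesis using yF L(2) unfolding L1_def L2_def by auto
      qed
    qed
  qed
  have "sorted_wrt lexless (L1 @ x # L2)"
  proof -
    have "sorted_wrt lexless L1" "sorted_wrt lexless L2" unfolding L1_def L2_def using L(3)
      by (auto intro: sorted_wrt_filter)
    moreover have "\<forall>a\<in>set L1. \<forall>b\<in>set (x # L2). lexless a b"
    proof (intro ballI)
      fix a b assume a: "a \<in> set L1" and b: "b \<in> set (x # L2)"
      have a': "a \<in> F" "lexless a x" using a L(2) unfolding L1_def by auto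
      show "lexless a b"
      proof (cases "b = x")
        case True thus ?thesis using a' by simp
      next
        case False hence "b \<in> F" "lexless x b" using b L(2) unfolding L2_def by auto
        thus ?thesis using lex_trans[of a x b] a' fx fF by auto
      qed
    qed
    moreover have "\<forall>b\<in>set L2. lexless x b" unfolding L2_def by auto
    ultimately show ?thesis by (simp add: sorted_wrt_append)
  qed
  thus ?case using dist setL by blast
qed

lemma lex_list_props: "distinct (lex_list n) \<and> set (lex_list n) = triples n \<and> sorted_wrt lexless (lex_list n)"
proof -
  have fin: "finite (triples n)" unfolding triples_def by (rule finite_subset[of _ "Pow {1..n}"]) auto
  have "\<forall>S\<in>triples n. finite S" unfolding triples_def using finite_subset by auto
  from sorted_exists[OF fin this] show ?thesis unfolding lex_list_def by (rule someI_ex)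
qed

lemma before1:
  assumes S: "S \<in> triples n" "1 \<in> S" and T: "T \<in> triples n" and l: "lexless T S"
  shows "1 \<in> T"
proof -
  have f: "finite S" "finite T" using S T unfolding triples_def using finite_subset by auto
  obtain a where a: "a \<in> T" "a \<notin> S" "\<forall>x<a. x \<in> T \<longleftrightarrow> x \<in> S" using l lexless_char f by blast
  have "a \<ge> 1" using a T unfolding triples_def by auto
  moreover have "a \<noteq> 1" using a S by auto
  ultimately have "1 < a" by simp
  thus ?thesis using a S by auto
qed


lemma c0_pair:
  assumes p: "p \<subseteq> {2..n}" "card p = 2" and T: "finite T" "card T = 3"
  shows "c0 (insert 1 p) T \<noteq> 0 \<longleftrightarrow> p \<subseteq> T"
proof -
  obtain x y where xy: "p = {x,y}" "x \<noteq> y" using p(2) by (meson card_2_iff)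
  have x2: "2 \<le> x" "2 \<le> y" using p(1) xy by auto
  show ?thesis
  proof (cases "x < y")
    case True
    thus ?thesis using spec3[OF x2(1) True T] xy by simp
  next
    case False
    hence "y < x" using xy by simp
    thus ?thesis using spec3[OF x2(2) _ T, of x] xy by (simp add: insert_commute)
  qed
qed

theorem mainTheorem9:
  fixes n :: nat and H :: "nat set set"
  assumes "n \<ge> 3"
    and "H \<subseteq> triples n"
    and "\<forall>A. A \<subseteq> {1..n} \<and> card A = 4 \<longrightarrow> (\<exists>F\<in>H. F \<subseteq> A)"
  shows "card {F \<in> ext_shift_lex n H. 1 \<in> F} \<ge> (n - 2) choose 2"
proof -
  have hc: "\<forall>F\<in>H. card F = 3" using assms(2) unfolding triples_def by auto
  define V where "V = {2..n}"
  have Vp: "finite V" "1 \<notin> V" "insert 1 V \<subseteq> {1..n}" "card V = n - 1"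
    using assms(1) unfolding V_def by auto
  obtain ps \<tau> where ps: "distinct ps" "\<forall>p\<in>set ps. p \<subseteq> V \<and> card p = 2"
      "(n - 1 - 1) choose 2 \<le> length ps"
      "\<forall>p\<in>set ps. \<tau> p \<in> H \<and> p \<subseteq> \<tau> p \<and> \<tau> p \<subseteq> insert 1 V"
      "\<forall>i j. i < j \<longrightarrow> j < length ps \<longrightarrow> \<not> ps!j \<subseteq> \<tau> (ps!i)"
    using comb[OF assms(3) hc Vp] by (elim exE conjE) (rule that; assumption)
  define Sel where "Sel = {F \<in> ext_shift_lex n H. 1 \<in> F}"
  define k where "k = length ps"
  have LP: "distinct (lex_list n) \<and> set (lex_list n) = triples n \<and> sorted_wrt lexless (lex_list n)"
    by (rule lex_list_props)
  have "ext_shift_lex n H \<subseteq> {} \<union> set (lex_list n)" unfolding ext_shift_lex_def by (rule g_sub)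
  hence "finite (ext_shift_lex n H)" by (rule finite_subset) simp
  hence finSel: "finite Sel" unfolding Sel_def by simp
  have psi: "ps!i \<in> set ps" if "i < k" for i using that k_def by simp
  have rowT: "insert 1 (ps!i) \<in> triples n" if i: "i < k" for i
  proof -
    have "ps!i \<subseteq> V" "card (ps!i) = 2" using ps(2) psi[OF i] by auto
    moreover have "1 \<notin> ps!i" using \<open>ps!i \<subseteq> V\<close> Vp(2) by auto
    moreover have "finite (ps!i)" using \<open>card (ps!i) = 2\<close> by (intro card_ge_0_finite) simp
    ultimately show ?thesis unfolding triples_def V_def using assms(1) by auto
  qed
  have sp: "\<forall>i<k. \<exists>coef. \<forall>T\<in>H. compound3 (insert 1 (ps!i)) T = (\<Sum>S'\<in>Sel. coef S' * compound3 S' T)"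
  proof (intro allI impI)
    fix i assume i: "i < k"
    let ?S = "insert 1 (ps!i)"
    have "?S \<in> set (lex_list n)" using rowT[OF i] LP by simp
    then obtain L1 L2 where L: "lex_list n = L1 @ ?S # L2" by (meson split_list)
    have "sorted_wrt lexless (L1 @ ?S # L2)" using LP L by simp
    hence lt: "\<forall>T\<in>set L1. lexless T ?S" by (simp add: sorted_wrt_append)
    have "\<forall>T\<in>set L1. T \<in> triples n" using LP L by (metis UnI1 set_append)
    hence "\<forall>T\<in>{} \<union> set L1. 1 \<in> T" using lt before1[OF rowT[OF i]] by auto
    from greedy_span[OF finite.emptyI L _ this, of H] 
    have "spans H {F \<in> greedy H {} (lex_list n). 1 \<in> F} ?S" by simp
    thus "\<exists>coef. \<forall>T\<in>H. compound3 ?S T = (\<Sum>S'\<in>Sel. coef S' * compound3 S' T)"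
      unfolding spans_def Sel_def ext_shift_lex_def .
  qed
  have cH: "\<forall>j<k. \<tau> (ps!j) \<in> H" using ps(4) psi by auto
  have cfac: "c0 (insert 1 (ps!i)) (\<tau> (ps!j)) \<noteq> 0 \<longleftrightarrow> ps!i \<subseteq> \<tau> (ps!j)" if "i < k" "j < k" for i j
  proof -
    have "ps!i \<subseteq> {2..n}" "card (ps!i) = 2" using ps(2) psi[OF that(1)] V_def by auto
    moreover have "card (\<tau> (ps!j)) = 3" using cH hc that(2) by auto
    moreover hence "finite (\<tau> (ps!j))" by (intro card_ge_0_finite) simp
    ultimately show ?thesis using c0_pair by blast
  qed
  have low: "\<forall>i j. j < i \<longrightarrow> i < k \<longrightarrow> c0 (insert 1 (ps!i)) (\<tau> (ps!j)) = 0"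
  proof (intro allI impI)
    fix i j assume ij: "j < i" "i < k"
    hence "\<not> ps!i \<subseteq> \<tau> (ps!j)" using ps(5) k_def by blast
    thus "c0 (insert 1 (ps!i)) (\<tau> (ps!j)) = 0" using cfac[of i j] ij by auto
  qed
  have diag: "\<forall>i<k. c0 (insert 1 (ps!i)) (\<tau> (ps!i)) \<noteq> 0"
    using cfac ps(4) psi by auto
  have "k \<le> card Sel"
    by (rule alg[OF finSel sp cH low diag])
  moreover have "(n - 2) choose 2 \<le> k" using ps(3) k_def by (simp add: numeral_2_eq_2)
  ultimately show ?thesis unfolding Sel_def by linarith
qed

end
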